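(* Let $n>1$ be a natural number and $\Psi_n(t) = 1+t+\cdots+t^{n-1}$. Then $\operatorname{Discr}_\ast(\Psi_n(t)) = n^{n-2}$ and $\operatorname{Prod}_\ast(\Psi_n(t)) = n^{n-1}$; in particular $\operatorname{Discr}_\ast(\Psi_n(t))\cdot\operatorname{Prod}_\ast(\Psi_n(t)) = n^{n-2}\cdot n^{n-1}$.
   Context: For nonconstant $r(t)\in\mathbb{Z}[t]$ of degree $d$ with leading coefficient $a$, distinct roots $\lambda_1,\dots,\lambda_l\in\overline{\mathbb{Q}}$ with multiplicities $m_1,\dots,m_l$, and $m=\max m_i$: $\operatorname{Discr}_\ast(r(t)) := a^{1+2d^2}(m-1)!\prod_{1\le i\ne j\le l}(\lambda_i-\lambda_j)^m$ and $\operatorname{Prod}_\ast(r(t)) := a^{2d^3}\prod_{1\le i,j\le l,\ r(\lambda_i\lambda_j)\ne0}r(\lambda_i\lambda_j)$. *)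

theory Defs
  imports "HOL-Computational_Algebra.Polynomial" Complex_Main
begin

text \<open>Roots are taken in the complex numbers (an algebraically closed field
containing the algebraic closure of the rationals); the quantities below do not
depend on the choice of embedding.\<close>

definition croots :: "int poly \<Rightarrow> complex set" where
  "croots r = {z. poly (map_poly (of_int :: int \<Rightarrow> complex) r) z = 0}"

definition max_mult :: "int poly \<Rightarrow> nat" where
  "max_mult r = Max ((\<lambda>z. order z (map_poly of_int r :: complex poly)) ` croots r)"

definition Discr_star :: "int poly \<Rightarrow> complex" where
  "Discr_star r =
     of_int (lead_coeff r) ^ (1 + 2 * (degree r)^2) * of_nat (fact (max_mult r - 1)) *
     (\<Prod>p \<in> {(x, y). x \<in> croots r \<and> y \<in> croots r \<and> x \<noteq> y}.
        (fst p - snd p) ^ max_mult r)"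

definition Prod_star :: "int poly \<Rightarrow> complex" where
  "Prod_star r =
     of_int (lead_coeff r) ^ (2 * (degree r)^3) *
     (\<Prod>p \<in> {(x, y). x \<in> croots r \<and> y \<in> croots r \<and>
                     poly (map_poly (of_int :: int \<Rightarrow> complex) r) (x * y) \<noteq> 0}.
        poly (map_poly (of_int :: int \<Rightarrow> complex) r) (fst p * snd p))"

definition Psi :: "nat \<Rightarrow> int poly" where
  "Psi n = (\<Sum>i<n. monom 1 i)"

end

theory Submission imports Defs "HOL-Computational_Algebra.Fundamental_Theorem_Algebra" begin

lemma psi_coeff: "coeff (Psi n) i = (if i < n then 1 else 0)"
  by (simp add: Psi_def coeff_sum coeff_monom)

lemma psi_map: "map_poly (of_int :: int \<Rightarrow> complex) (Psi n) = (\<Sum>i<n. monom 1 i)"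
  by (rule poly_eqI) (simp add: coeff_map_poly psi_coeff coeff_sum coeff_monom)

lemma psi_poly: "poly (map_poly (of_int :: int \<Rightarrow> complex) (Psi n)) z = (\<Sum>i<n. z ^ i)"
  by (simp add: psi_map poly_sum poly_monom)

lemma geo: "(\<Sum>i<n. (z::complex) ^ i) * (z - 1) = z ^ n - 1"
  by (induction n) (auto simp: algebra_simps)

lemma psi_degree: "n > 0 \<Longrightarrow> degree (Psi n) = n - 1"
proof -
  assume "n > 0"
  have "degree (Psi n) \<le> n - 1" by (rule degree_le) (auto simp: psi_coeff)
  moreover have "n - 1 \<le> degree (Psi n)" by (rule le_degree) (use \<open>n>0\<close> in \<open>simp add: psi_coeff\<close>)
  ultimately show ?thesis by simp
qed

lemma psi_lead: "n > 0 \<Longrightarrow> lead_coeff (Psi n) = 1"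
  by (simp add: psi_degree psi_coeff)


lemma roots_eq: assumes "n > 0"
  shows "croots (Psi n) = {z. z ^ n = 1 \<and> z \<noteq> 1}"
proof -
  have "poly (map_poly (of_int :: int \<Rightarrow> complex) (Psi n)) z = 0 \<longleftrightarrow> z ^ n = 1 \<and> z \<noteq> 1" for z
  proof (cases "z = 1")
    case True then show ?thesis using assms by (simp add: psi_poly)
  next
    case False
    then have "(\<Sum>i<n. z ^ i) = (z ^ n - 1) / (z - 1)" using geo[of z n]
      by (simp add: eq_divide_eq)
    then show ?thesis using False by (simp add: psi_poly)
  qed
  then show ?thesis unfolding croots_def by auto
qed

lemma P_nz: "n > 0 \<Longrightarrow> map_poly (of_int :: int \<Rightarrow> complex) (Psi n) \<noteq> 0"
proof
  assume "n > 0" "map_poly (of_int :: int \<Rightarrow> complex) (Psi n) = 0"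
  then have "coeff (map_poly (of_int :: int \<Rightarrow> complex) (Psi n)) 0 = 0" by simp
  with \<open>n>0\<close> show False by (simp add: coeff_map_poly psi_coeff)
qed

lemma Q_eq: "[:-1,1:] * map_poly (of_int :: int \<Rightarrow> complex) (Psi n) = monom 1 n - 1"
proof -
  have "poly ([:-1,1:] * map_poly (of_int :: int \<Rightarrow> complex) (Psi n)) = poly (monom 1 n - 1)"
  proof
    fix x :: complex
    have "poly ([:-1,1:] * map_poly (of_int :: int \<Rightarrow> complex) (Psi n)) x = (\<Sum>i<n. x ^ i) * (x - 1)"
      by (simp add: psi_poly algebra_simps)
    also have "\<dots> = poly (monom 1 n - 1) x" by (simp add: geo poly_monom)
    finally show "poly ([:-1,1:] * map_poly (of_int :: int \<Rightarrow> complex) (Psi n)) x = poly (monom 1 n - 1) x" .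
  qed
  then show ?thesis by (simp add: poly_eq_poly_eq_iff)
qed

lemma order_one: assumes "n > 0" "z \<in> croots (Psi n)"
  shows "order z (map_poly (of_int :: int \<Rightarrow> complex) (Psi n)) = 1"
proof -
  let ?P = "map_poly (of_int :: int \<Rightarrow> complex) (Psi n)"
  let ?Q = "monom 1 n - (1 :: complex poly)"
  have z: "z ^ n = 1" "z \<noteq> 1" using assms roots_eq by auto
  have z0: "z \<noteq> 0" using z assms by (auto simp: zero_power)
  have Qnz: "?Q \<noteq> 0" using Q_eq[of n] P_nz[OF assms(1)] by (metis mult_eq_0_iff pCons_eq_0_iff one_neq_zero)
  have "poly ?Q z = 0" using z by (simp add: poly_monom)
  then have "order z ?Q = Suc (order z (pderiv ?Q))" using order_pderiv Qnz by blast
  moreover have "poly (pderiv ?Q) z \<noteq> 0" using z0 assms by (simp add: pderiv_diff pderiv_monom poly_monom)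
  then have "order z (pderiv ?Q) = 0" by (simp add: order_root)
  ultimately have "order z ?Q = 1" by simp
  moreover have "order z ?Q = order z [:-1,1:] + order z ?P"
    using Q_eq[of n] Qnz order_mult by metis
  moreover have "poly [:-1,(1::complex):] z \<noteq> 0" using z by simp
  then have "order z [:-1,(1::complex):] = 0" by (metis order_root)
  ultimately show ?thesis by simp
qed


lemma R_finite: "n > 0 \<Longrightarrow> finite (croots (Psi n))"
  unfolding croots_def using P_nz poly_roots_finite by blast

lemma decomp: assumes "n > 0"
  shows "map_poly (of_int :: int \<Rightarrow> complex) (Psi n) = (\<Prod>z\<in>croots (Psi n). [:-z,1:])"
proof -
  let ?P = "map_poly (of_int :: int \<Rightarrow> complex) (Psi n)"
  have degP: "degree ?P = degree (Psi n)" by (rule degree_map_poly) simp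
  have lc: "lead_coeff ?P = 1" using assms by (simp add: degP coeff_map_poly psi_lead)
  have "?P = smult (lead_coeff ?P) (\<Prod>z|poly ?P z = 0. [:-z, 1:] ^ order z ?P)"
    by (rule complex_poly_decompose[symmetric])
  also have "\<dots> = (\<Prod>z\<in>croots (Psi n). [:-z,1:])"
    using lc order_one[OF assms] by (simp add: croots_def)
  finally show ?thesis .
qed

lemma card_R: assumes "n > 0" shows "card (croots (Psi n)) = n - 1"
proof -
  let ?P = "map_poly (of_int :: int \<Rightarrow> complex) (Psi n)"
  have degP: "degree ?P = degree (Psi n)" by (rule degree_map_poly) simp
  have "degree ?P = (\<Sum>z\<in>croots (Psi n). degree [:-z,(1::complex):])"
    by (subst decomp[OF assms]) (rule degree_prod_sum_eq, simp)
  then show ?thesis using degP psi_degree[OF assms] by simp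
qed

lemma prodx: assumes "n > 0" "x \<in> croots (Psi n)"
  shows "(x - 1) * (\<Prod>y\<in>croots (Psi n) - {x}. (x - y)) = of_nat n * x ^ (n - 1)"
proof -
  let ?R = "croots (Psi n)"
  define G where "G = [:-1,1:] * (\<Prod>y\<in>?R - {x}. [:-y,(1::complex):])"
  have "(\<Prod>y\<in>?R. [:-y,(1::complex):]) = [:-x,1:] * (\<Prod>y\<in>?R - {x}. [:-y,1:])"
    using R_finite[OF assms(1)] assms(2) by (simp add: prod.remove)
  then have "monom 1 n - 1 = [:-1,1:] * ([:-x,1:] * (\<Prod>y\<in>?R - {x}. [:-y,1:]))"
    using Q_eq[of n] decomp[OF assms(1)] by simp
  then have eq: "monom 1 n - 1 = [:-x,1:] * G"
    by (simp only: G_def mult.left_commute)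
  have "poly (pderiv (monom 1 n - 1)) x = poly (pderiv ([:-x,1:] * G)) x" by (simp only: eq)
  then have "of_nat n * x ^ (n - 1) = poly G x"
    by (simp add: pderiv_diff pderiv_monom poly_monom pderiv_mult pderiv_pCons pderiv_smult)
  also have "poly G x = (x - 1) * (\<Prod>y\<in>?R - {x}. (x - y))"
    by (simp add: G_def poly_prod algebra_simps)
  finally show ?thesis by simp
qed


lemma prod_vals: assumes "n > 0"
  shows "(\<Prod>x\<in>croots (Psi n). (1 - x)) = of_nat n" "(\<Prod>x\<in>croots (Psi n). (- x)) = 1"
proof -
  have "poly (map_poly (of_int :: int \<Rightarrow> complex) (Psi n)) 1 = of_nat n" by (simp add: psi_poly)
  then show "(\<Prod>x\<in>croots (Psi n). (1 - x)) = of_nat n"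
    by (simp add: decomp[OF assms] poly_prod)
  have "poly (map_poly (of_int :: int \<Rightarrow> complex) (Psi n)) 0 = 1"
    using assms by (simp add: poly_0_coeff_0 coeff_map_poly psi_coeff)
  then show "(\<Prod>x\<in>croots (Psi n). (- x)) = 1"
    by (simp add: decomp[OF assms] poly_prod)
qed

lemma max_mult_one: assumes "n > 1" shows "max_mult (Psi n) = 1"
proof -
  have "croots (Psi n) \<noteq> {}" using card_R[of n] assms by auto
  then have "(\<lambda>z. order z (map_poly of_int (Psi n) :: complex poly)) ` croots (Psi n) = {1}"
    using order_one[of n] assms by auto
  then show ?thesis by (simp add: max_mult_def)
qed

lemma discr_val: assumes "n > 1"
  shows "Discr_star (Psi n) = of_nat n ^ (n - 2)"
proof -
  let ?R = "croots (Psi n)"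
  have n0: "n > 0" using assms by simp
  have fin: "finite ?R" using R_finite[OF n0] .
  have cR: "card ?R = n - 1" using card_R[OF n0] .
  define D where "D = (\<Prod>x\<in>?R. \<Prod>y\<in>?R - {x}. (x - y))"
  have "{(x, y). x \<in> ?R \<and> y \<in> ?R \<and> x \<noteq> y} = Sigma ?R (\<lambda>x. ?R - {x})" by auto
  then have "(\<Prod>p \<in> {(x, y). x \<in> ?R \<and> y \<in> ?R \<and> x \<noteq> y}. (fst p - snd p) ^ 1) = D"
    unfolding D_def using fin by (simp add: prod.Sigma split_def)
  then have DS: "Discr_star (Psi n) = D"
    using max_mult_one[OF assms] by (simp add: Discr_star_def psi_lead[OF n0])
  define s where "s = (-1::complex) ^ (n - 1)"
  have "D * (\<Prod>x\<in>?R. (x - 1)) = (\<Prod>x\<in>?R. (x - 1) * (\<Prod>y\<in>?R - {x}. (x - y)))"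
    by (simp add: D_def prod.distrib mult.commute)
  also have "\<dots> = (\<Prod>x\<in>?R. of_nat n * x ^ (n - 1))"
    using prodx[OF n0] by (intro prod.cong) auto
  also have "\<dots> = of_nat n ^ (n - 1) * (\<Prod>x\<in>?R. x) ^ (n - 1)"
    by (simp add: prod.distrib cR prod_power_distrib)
  finally have e1: "D * (\<Prod>x\<in>?R. (x - 1)) = of_nat n ^ (n - 1) * (\<Prod>x\<in>?R. x) ^ (n - 1)" .
  have "(\<Prod>x\<in>?R. (x - 1)) = (\<Prod>x\<in>?R. (-1) * (1 - x))" by simp
  also have "\<dots> = s * of_nat n" by (simp only: prod.distrib prod_vals[OF n0]) (simp add: cR s_def)
  finally have e2: "(\<Prod>x\<in>?R. (x - 1)) = s * of_nat n" .
  have "(\<Prod>x\<in>?R. (-1) * x) = 1" using prod_vals(2)[OF n0] by simp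
  then have sp: "s * (\<Prod>x\<in>?R. x) = 1" by (simp only: prod.distrib) (simp add: cR s_def)
  have "s * s = ((-1) * (-1::complex)) ^ (n - 1)" unfolding s_def by (rule power_mult_distrib[symmetric])
  then have ss: "s * s = 1" by simp
  have px: "(\<Prod>x\<in>?R. x) = s" using sp ss by (metis mult.commute mult.left_neutral mult.assoc)
  have "s ^ (n - 1) = s"
  proof (cases "even (n - 1)")
    case True then show ?thesis by (simp add: s_def)
  next
    case False then show ?thesis by (simp add: s_def)
  qed
  then have "D * (s * of_nat n) = of_nat n ^ (n - 1) * s" using e1 e2 px by simp
  moreover have "of_nat n ^ (n - 1) = (of_nat n :: complex) * of_nat n ^ (n - 2)"
  proof -
    have "n - 1 = Suc (n - 2)" using assms by simp
    then show ?thesis by (simp only: power_Suc)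
  qed
  ultimately have "D * (s * of_nat n) = of_nat n ^ (n - 2) * (s * of_nat n)" by (simp add: ac_simps)
  moreover have "s * of_nat n \<noteq> 0" using ss n0 by auto
  ultimately have "D = of_nat n ^ (n - 2)" by simp
  with DS show ?thesis by simp
qed


lemma prod_val: assumes "n > 1"
  shows "Prod_star (Psi n) = of_nat n ^ (n - 1)"
proof -
  let ?R = "croots (Psi n)"
  let ?P = "map_poly (of_int :: int \<Rightarrow> complex) (Psi n)"
  have n0: "n > 0" using assms by simp
  have R: "z \<in> ?R \<longleftrightarrow> z ^ n = 1 \<and> z \<noteq> 1" for z using roots_eq[OF n0] by auto
  have Rp: "poly ?P z = 0 \<longleftrightarrow> z \<in> ?R" for z by (simp add: croots_def)
  have "{(x, y). x \<in> ?R \<and> y \<in> ?R \<and> poly ?P (x * y) \<noteq> 0} = (\<lambda>x. (x, 1 / x)) ` ?R"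
  proof (intro equalityI subsetI)
    fix p assume "p \<in> {(x, y). x \<in> ?R \<and> y \<in> ?R \<and> poly ?P (x * y) \<noteq> 0}"
    then obtain x y where p: "p = (x, y)" "x \<in> ?R" "y \<in> ?R" "poly ?P (x * y) \<noteq> 0" by auto
    have "(x * y) ^ n = 1" using p R by (simp add: power_mult_distrib)
    then have "x * y = 1" using p(4) Rp R by blast
    then have "y = 1 / x" by (metis divide_eq_eq mult.commute mult_not_zero zero_neq_one)
    then show "p \<in> (\<lambda>x. (x, 1 / x)) ` ?R" using p by auto
  next
    fix p assume "p \<in> (\<lambda>x. (x, 1 / x)) ` ?R"
    then obtain x where p: "p = (x, 1 / x)" "x \<in> ?R" by auto
    have xn: "x ^ n = 1" "x \<noteq> 1" using p(2) R by blast+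
    have x0: "x \<noteq> 0" using xn n0 by (auto simp: zero_power)
    have "(1 / x) ^ n = 1" "1 / x \<noteq> 1" using xn by (auto simp: power_one_over)
    then have "1 / x \<in> ?R" using R by blast
    moreover have "poly ?P (x * (1 / x)) \<noteq> 0" using x0 n0 by (simp add: psi_poly)
    ultimately show "p \<in> {(x, y). x \<in> ?R \<and> y \<in> ?R \<and> poly ?P (x * y) \<noteq> 0}" using p by auto
  qed
  then have "(\<Prod>p \<in> {(x, y). x \<in> ?R \<and> y \<in> ?R \<and> poly ?P (x * y) \<noteq> 0}. poly ?P (fst p * snd p))
     = (\<Prod>x\<in>?R. poly ?P (x * (1 / x)))"
    by (simp add: prod.reindex inj_on_def)
  also have "\<dots> = (\<Prod>x\<in>?R. of_nat n)"
  proof (intro prod.cong refl)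
    fix x assume "x \<in> ?R"
    then have "x ^ n = 1" using R by blast
    then have "x \<noteq> 0" using n0 by (auto simp: zero_power)
    then show "poly ?P (x * (1 / x)) = of_nat n" by (simp add: psi_poly)
  qed
  also have "\<dots> = of_nat n ^ (n - 1)" by (simp add: card_R[OF n0])
  finally show ?thesis by (simp add: Prod_star_def psi_lead[OF n0])
qed

theorem proposition4p12:
  fixes n :: nat
  assumes "n > 1"
  shows "Discr_star (Psi n) = of_nat n ^ (n - 2)
       \<and> Prod_star (Psi n) = of_nat n ^ (n - 1)
       \<and> Discr_star (Psi n) * Prod_star (Psi n) = of_nat n ^ (n - 2) * of_nat n ^ (n - 1)"
  using discr_val[OF assms] prod_val[OF assms] by simp

end
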